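(* Let $N\in\mathbb{N}$ and $|\mu\rangle\in(\mathbb{R}^4)^{\otimes N}$ with $\mu_{1\cdots1}=1$ (equivalently, $\Pi^{(N)}_\mu$ is unital and trace-preserving). If $\Pi^{(N)}_\mu$ is entanglement breaking, then $\sum_{i_1,\dots,i_N}|\mu_{i_1\cdots i_N}|\le 2^N$.
   Context: Pauli matrices $\sigma_1=I_2$, $\sigma_2=\begin{pmatrix}0&1\\1&0\end{pmatrix}$, $\sigma_3=\begin{pmatrix}1&0\\0&-1\end{pmatrix}$, $\sigma_4=\begin{pmatrix}0&-i\\i&0\end{pmatrix}$; $\Pi^{(N)}_\mu(X)=\sum_{i_1,\dots,i_N}\frac{\mu_{i_1\cdots i_N}}{2^N}\mathrm{Tr}[(\sigma_{i_1}\otimes\cdots\otimes\sigma_{i_N})X]\sigma_{i_1}\otimes\cdots\otimes\sigma_{i_N}$ on $\mathcal{M}_2^{\otimes N}$. A linear map $L:\mathcal{M}_{d_1}\to\mathcal{M}_{d_2}$ is entanglement breaking if its Choi matrix $C_L=(\mathrm{id}_{d_1}\otimes L)(|\Omega\rangle\langle\Omega|)$, $|\Omega\rangle=\sum_{i=1}^{d_1}|i\rangle\otimes|i\rangle$, is separable, i.e. a finite sum $\sum_k A_k\otimes B_k$ with $A_k,B_k$ positive semidefinite. *)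

theory Defs
  imports Complex_Main "Jordan_Normal_Form.Matrix"
begin

definition kron :: "complex mat \<Rightarrow> complex mat \<Rightarrow> complex mat" where
  "kron A B = mat (dim_row A * dim_row B) (dim_col A * dim_col B)
     (\<lambda>(i,j). A $$ (i div dim_row B, j div dim_col B) * B $$ (i mod dim_row B, j mod dim_col B))"

(* Pauli matrices; index 0,1,2,3 corresponds to the paper's sigma_1..sigma_4 *)
definition pauli :: "nat \<Rightarrow> complex mat" where
  "pauli i = (if i = 0 then mat_of_rows_list 2 [[1,0],[0,1]]
              else if i = 1 then mat_of_rows_list 2 [[0,1],[1,0]]
              else if i = 2 then mat_of_rows_list 2 [[1,0],[0,-1]]
              else mat_of_rows_list 2 [[0,-\<i>],[\<i>,0]])"

definition pauli_string :: "nat list \<Rightarrow> complex mat" where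
  "pauli_string is = foldr (\<lambda>i M. kron (pauli i) M) is (1\<^sub>m 1)"

definition idx :: "nat \<Rightarrow> nat list set" where
  "idx N = {is. length is = N \<and> set is \<subseteq> {0..<4}}"

definition mtrace :: "complex mat \<Rightarrow> complex" where
  "mtrace A = (\<Sum>i<dim_row A. A $$ (i,i))"

definition PiMap :: "nat \<Rightarrow> (nat list \<Rightarrow> real) \<Rightarrow> complex mat \<Rightarrow> complex mat" where
  "PiMap N \<mu> X = mat (2^N) (2^N) (\<lambda>(r,c).
      \<Sum>is\<in>idx N. complex_of_real (\<mu> is / 2^N) * mtrace (pauli_string is * X) * pauli_string is $$ (r,c))"

definition unit_mat :: "nat \<Rightarrow> nat \<Rightarrow> nat \<Rightarrow> complex mat" where
  "unit_mat d i j = mat d d (\<lambda>(r,c). if r = i \<and> c = j then 1 else 0)"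

(* Choi matrix (id \<otimes> L)(|Omega><Omega|) = sum_{i,j} |i><j| \<otimes> L(|i><j|) *)
definition choi :: "nat \<Rightarrow> nat \<Rightarrow> (complex mat \<Rightarrow> complex mat) \<Rightarrow> complex mat" where
  "choi d1 d2 L = mat (d1*d2) (d1*d2)
     (\<lambda>(r,c). \<Sum>i<d1. \<Sum>j<d1. kron (unit_mat d1 i j) (L (unit_mat d1 i j)) $$ (r,c))"

definition psd :: "complex mat \<Rightarrow> bool" where
  "psd A \<longleftrightarrow> dim_row A = dim_col A \<and>
     (\<forall>v. dim_vec v = dim_col A \<longrightarrow>
        (let q = (\<Sum>i<dim_row A. \<Sum>j<dim_col A. cnj (v $ i) * A $$ (i,j) * v $ j)
         in Im q = 0 \<and> Re q \<ge> 0))"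

definition separable_op :: "nat \<Rightarrow> nat \<Rightarrow> complex mat \<Rightarrow> bool" where
  "separable_op d1 d2 C \<longleftrightarrow> (\<exists>(n::nat) A B.
     (\<forall>k<n. A k \<in> carrier_mat d1 d1 \<and> psd (A k) \<and> B k \<in> carrier_mat d2 d2 \<and> psd (B k)) \<and>
     C = mat (d1*d2) (d1*d2) (\<lambda>(r,c). \<Sum>k<n. kron (A k) (B k) $$ (r,c)))"

definition entanglement_breaking :: "nat \<Rightarrow> nat \<Rightarrow> (complex mat \<Rightarrow> complex mat) \<Rightarrow> bool" where
  "entanglement_breaking d1 d2 L \<longleftrightarrow> separable_op d1 d2 (choi d1 d2 L)"

end

theory Submission
  imports Defs
begin

lemma sum_split_div:
  fixes f :: "nat \<Rightarrow> 'a::comm_monoid_add"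
  shows "(\<Sum>r<a*m. f r) = (\<Sum>x<a. \<Sum>y<m. f (x*m+y))"
proof -
  have "(\<Sum>r<a*m. f r) = (\<Sum>x<a. sum f {x*m..<x*m+m})"
    by (rule sum.nat_group[symmetric])
  also have "\<dots> = (\<Sum>x<a. \<Sum>y<m. f (x*m+y))"
    apply (rule sum.cong[OF refl])
    subgoal for x
    using sum.shift_bounds_nat_ivl[of f 0 "x*m" m]
    by (simp add: atLeast0LessThan add.commute) done
  finally show ?thesis .
qed

lemma prod4:
  fixes F G :: "nat \<Rightarrow> nat \<Rightarrow> 'a::comm_semiring_0"
  shows "(\<Sum>x<a. \<Sum>y<b. \<Sum>x'<c. \<Sum>y'<e. F x x' * G y y') =
         (\<Sum>x<a. \<Sum>x'<c. F x x') * (\<Sum>y<b. \<Sum>y'<e. G y y')"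
proof -
  have "(\<Sum>x<a. \<Sum>y<b. \<Sum>x'<c. \<Sum>y'<e. F x x' * G y y') = (\<Sum>x<a. \<Sum>x'<c. \<Sum>y<b. \<Sum>y'<e. F x x' * G y y')"
    by (rule sum.cong[OF refl], rule sum.swap)
  also have "\<dots> = (\<Sum>x<a. \<Sum>x'<c. F x x' * (\<Sum>y<b. \<Sum>y'<e. G y y'))"
    by (simp add: sum_distrib_left)
  also have "\<dots> = (\<Sum>x<a. \<Sum>x'<c. F x x') * (\<Sum>y<b. \<Sum>y'<e. G y y')"
    by (simp add: sum_distrib_right)
  finally show ?thesis .
qed

lemma kron_dims[simp]: "dim_row (kron A B) = dim_row A * dim_row B" "dim_col (kron A B) = dim_col A * dim_col B"
  by (simp_all add: kron_def)

lemma kron_entry: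
  assumes "r < dim_row A * dim_row B" "c < dim_col A * dim_col B"
  shows "kron A B $$ (r,c) = A $$ (r div dim_row B, c div dim_col B) * B $$ (r mod dim_row B, c mod dim_col B)"
  using assms by (simp add: kron_def)

lemmas neqs = numeral_eq_iff semiring_norm zero_neq_numeral numeral_neq_zero num.distinct One_nat_def[symmetric] zero_neq_one one_neq_zero
lemma pauli_0: "pauli 0 = mat_of_rows_list 2 [[1,0],[0,1]]" unfolding pauli_def by (simp only: if_True simp_thms)
lemma pauli_1: "pauli 1 = mat_of_rows_list 2 [[0,1],[1,0]]" unfolding pauli_def by (simp only: if_True if_False neqs)
lemma pauli_Suc0: "pauli (Suc 0) = mat_of_rows_list 2 [[0,1],[1,0]]" using pauli_1 by simp
lemma pauli_2: "pauli 2 = mat_of_rows_list 2 [[1,0],[0,-1]]" unfolding pauli_def by (simp only: if_True if_False neqs)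
lemma pauli_3: "pauli 3 = mat_of_rows_list 2 [[0,-\<i>],[\<i>,0]]" unfolding pauli_def by (simp only: if_True if_False neqs)
lemma pauli_dims[simp]: "dim_row (pauli i) = 2" "dim_col (pauli i) = 2" unfolding pauli_def mat_of_rows_list_def by simp_all
lemma pauli_carrier[simp]: "pauli i \<in> carrier_mat 2 2"
  unfolding carrier_mat_def by simp
lemma sum2: "(\<Sum>a<(2::nat). f a) = f 0 + f 1"
  by (simp add: numeral_2_eq_2)
lemma pauli_orth1:
  assumes "i < 4" "j < 4"
  shows "(\<Sum>a<2. \<Sum>b<2. pauli i $$ (a,b) * cnj (pauli j $$ (a,b))) = (if i = j then 2 else 0)"
proof -
  have "i = 0 \<or> i = 1 \<or> i = 2 \<or> i = 3" "j = 0 \<or> j = 1 \<or> j = 2 \<or> j = 3" using assms by auto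
  then show ?thesis
    unfolding sum2
    by (elim disjE; hypsubst; simp add: pauli_0 pauli_1 pauli_Suc0 pauli_2 pauli_3 mat_of_rows_list_def)
qed
lemma pauli_trace1:
  assumes "i < 4"
  shows "(\<Sum>a<2. pauli i $$ (a,a)) = (if i = 0 then 2 else 0)"
proof -
  have "i = 0 \<or> i = 1 \<or> i = 2 \<or> i = 3" using assms by auto
  then show ?thesis
    unfolding sum2
    by (elim disjE; hypsubst; simp add: pauli_0 pauli_1 pauli_Suc0 pauli_2 pauli_3 mat_of_rows_list_def)
qed
lemma pauli_string_Cons: "pauli_string (i # s) = kron (pauli i) (pauli_string s)"
  by (simp add: pauli_string_def)

lemma pauli_string_carrier: "pauli_string s \<in> carrier_mat (2^length s) (2^length s)"
proof (induction s)
  case Nil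
  then show ?case by (simp add: pauli_string_def)
next
  case (Cons a s)
  then show ?case unfolding carrier_mat_def pauli_string_Cons by simp
qed

lemma dm: assumes "y < (M::nat)" shows "(x*M+y) div M = x" "(x*M+y) mod M = y"
  using assms by auto

lemma lt_mul: assumes "x < a" "y < (M::nat)" shows "x*M+y < a*M"
proof -
  have "x*M + y < (x+1)*M" using assms by simp
  also have "(x+1)*M \<le> a*M" using assms by (intro mult_right_mono) auto
  finally show ?thesis .
qed

lemma pauli_string_Cons_entry:
  assumes "x < 2" "x' < 2" "y < 2^m" "y' < 2^m" "length s = m"
  shows "pauli_string (i#s) $$ (x*2^m+y, x'*2^m+y') = pauli i $$ (x,x') * pauli_string s $$ (y,y')"
proof -
  have c: "dim_row (pauli_string s) = 2^m" "dim_col (pauli_string s) = 2^m"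
    using pauli_string_carrier[of s] assms(5) by auto
  have r: "x*2^m+y < 2 * 2^m" "x'*2^m+y' < 2 * 2^m"
    using lt_mul[of x 2 y "2^m"] lt_mul[of x' 2 y' "2^m"] assms by auto
  have "pauli_string (i#s) $$ (x*2^m+y, x'*2^m+y') = pauli i $$ ((x*2^m+y) div 2^m, (x'*2^m+y') div 2^m) * pauli_string s $$ ((x*2^m+y) mod 2^m, (x'*2^m+y') mod 2^m)"
    unfolding pauli_string_Cons using r by (subst kron_entry) (simp_all only: c pauli_dims)
  also have "\<dots> = pauli i $$ (x,x') * pauli_string s $$ (y,y')"
    using assms(3,4) by (simp only: dm)
  finally show ?thesis .
qed

lemma pauli_string_orth:
  assumes "length s = n" "length t = n" "set s \<subseteq> {0..<4}" "set t \<subseteq> {0..<4}"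
  shows "(\<Sum>a<2^n. \<Sum>b<2^n. pauli_string s $$ (a,b) * cnj (pauli_string t $$ (a,b))) = (if s = t then 2^n else 0)"
  using assms
proof (induction s arbitrary: n t)
  case Nil
  then show ?case by (simp add: pauli_string_def)
next
  case (Cons i s)
  then obtain j t' m where t: "t = j # t'" "n = Suc m" "length s = m" "length t' = m"
    by (cases t) auto
  have ij: "i < 4" "j < 4" "set s \<subseteq> {0..<4}" "set t' \<subseteq> {0..<4}" using Cons.prems t by auto
  have "(\<Sum>a<2^n. \<Sum>b<2^n. pauli_string (i#s) $$ (a,b) * cnj (pauli_string t $$ (a,b)))
     = (\<Sum>x<2. \<Sum>y<2^m. \<Sum>x'<2. \<Sum>y'<2^m. pauli_string (i#s) $$ (x*2^m+y,x'*2^m+y') * cnj (pauli_string (j#t') $$ (x*2^m+y,x'*2^m+y')))"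
    unfolding t by (simp add: sum_split_div)
  also have "\<dots> = (\<Sum>x<2. \<Sum>y<2^m. \<Sum>x'<2. \<Sum>y'<2^m. (pauli i $$ (x,x') * cnj (pauli j $$ (x,x'))) * (pauli_string s $$ (y,y') * cnj (pauli_string t' $$ (y,y'))))"
    by (intro sum.cong refl) (simp only: pauli_string_Cons_entry t lessThan_iff, simp only: complex_cnj_mult ac_simps)
  also have "\<dots> = (if i = j then 2 else 0) * (if s = t' then 2^m else 0)"
    unfolding prod4 pauli_orth1[OF ij(1,2)] Cons.IH[OF t(3,4) ij(3,4)] ..
  also have "\<dots> = (if i # s = t then 2^n else 0)" using t by auto
  finally show ?case .
qed

lemma pauli_string_trace:
  assumes "length s = n" "set s \<subseteq> {0..<4}"
  shows "(\<Sum>a<2^n. pauli_string s $$ (a,a)) = (if s = replicate n 0 then 2^n else 0)"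
  using assms
proof (induction s arbitrary: n)
  case Nil
  then show ?case by (simp add: pauli_string_def)
next
  case (Cons i s)
  then obtain m where t: "n = Suc m" "length s = m" by auto
  have ij: "i < 4" "set s \<subseteq> {0..<4}" using Cons.prems by auto
  have "(\<Sum>a<2^n. pauli_string (i#s) $$ (a,a))
     = (\<Sum>x<2. \<Sum>y<2^m. pauli_string (i#s) $$ (x*2^m+y,x*2^m+y))"
    unfolding t by (simp add: sum_split_div)
  also have "\<dots> = (\<Sum>x<2. \<Sum>y<2^m. pauli i $$ (x,x) * pauli_string s $$ (y,y))"
    by (intro sum.cong refl) (simp only: pauli_string_Cons_entry t lessThan_iff)
  also have "\<dots> = (\<Sum>x<2. pauli i $$ (x,x)) * (\<Sum>y<2^m. pauli_string s $$ (y,y))"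
    by (simp add: sum_product)
  also have "\<dots> = (if i = 0 then 2 else 0) * (if s = replicate m 0 then 2^m else 0)"
    unfolding pauli_trace1[OF ij(1)] Cons.IH[OF t(2) ij(2)] ..
  also have "\<dots> = (if i # s = replicate n 0 then 2^n else 0)" using t by auto
  finally show ?case .
qed

lemma mtrace_unit:
  assumes "P \<in> carrier_mat d d" "i < d" "j < d"
  shows "mtrace (P * unit_mat d i j) = P $$ (j,i)"
proof -
  have "\<And>r. r < d \<Longrightarrow> (P * unit_mat d i j) $$ (r,r) = (if r = j then P $$ (r,i) else 0)"
    using assms by (auto simp: unit_mat_def scalar_prod_def if_distrib[where f="\<lambda>x. _ * x"] sum.delta' cong: if_cong)
  then show ?thesis using assms by (simp add: mtrace_def)
qed


lemma cnj_self: "z * cnj z = (complex_of_real (cmod z))^2"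
  using complex_norm_square[of z] by simp

lemma bessel:
  fixes e :: "'t \<Rightarrow> 'd \<Rightarrow> complex" and X :: "'d \<Rightarrow> complex" and c :: real
  assumes T: "finite T" and D: "finite D" and c: "c > 0"
    and orth: "\<And>s t. s\<in>T \<Longrightarrow> t\<in>T \<Longrightarrow> (\<Sum>p\<in>D. e s p * cnj (e t p)) = (if s = t then complex_of_real c else 0)"
  shows "(\<Sum>t\<in>T. (cmod (\<Sum>p\<in>D. X p * cnj (e t p)))^2) \<le> c * (\<Sum>p\<in>D. (cmod (X p))^2)"
proof -
  define co where "co t = (\<Sum>p\<in>D. X p * cnj (e t p))" for t
  define Y where "Y p = (\<Sum>t\<in>T. co t * e t p)" for p
  define Q where "Q = (\<Sum>t\<in>T. (cmod (co t))^2)"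
  define H where "H = (\<Sum>p\<in>D. (cmod (X p))^2)"
  have XY: "(\<Sum>p\<in>D. X p * cnj (Y p)) = complex_of_real Q"
  proof -
    have "(\<Sum>p\<in>D. X p * cnj (Y p)) = (\<Sum>p\<in>D. \<Sum>t\<in>T. cnj (co t) * (X p * cnj (e t p)))"
      unfolding Y_def by (simp add: cnj_sum sum_distrib_left ac_simps)
    also have "\<dots> = (\<Sum>t\<in>T. \<Sum>p\<in>D. cnj (co t) * (X p * cnj (e t p)))"
      by (rule sum.swap)
    also have "\<dots> = (\<Sum>t\<in>T. cnj (co t) * co t)"
      unfolding co_def by (simp add: sum_distrib_left)
    also have "\<dots> = complex_of_real Q"
      unfolding Q_def by (simp add: cnj_self mult.commute)
    finally show ?thesis .
  qed
  have YX: "(\<Sum>p\<in>D. Y p * cnj (X p)) = complex_of_real Q"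
  proof -
    have "(\<Sum>p\<in>D. Y p * cnj (X p)) = cnj (\<Sum>p\<in>D. X p * cnj (Y p))"
      by (simp add: cnj_sum mult.commute)
    then show ?thesis using XY by simp
  qed
  have YY: "(\<Sum>p\<in>D. Y p * cnj (Y p)) = complex_of_real (c * Q)"
  proof -
    have "(\<Sum>p\<in>D. Y p * cnj (Y p)) = (\<Sum>p\<in>D. \<Sum>t\<in>T. \<Sum>s\<in>T. co s * (cnj (co t) * (e s p * cnj (e t p))))"
      unfolding Y_def by (simp add: cnj_sum sum_distrib_left sum_distrib_right ac_simps)
    also have "\<dots> = (\<Sum>p\<in>D. \<Sum>s\<in>T. \<Sum>t\<in>T. (co s * cnj (co t)) * (e s p * cnj (e t p)))"
      by (rule sum.cong[OF refl], subst sum.swap, simp add: ac_simps)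
    also have "\<dots> = (\<Sum>s\<in>T. \<Sum>p\<in>D. \<Sum>t\<in>T. (co s * cnj (co t)) * (e s p * cnj (e t p)))"
      by (rule sum.swap)
    also have "\<dots> = (\<Sum>s\<in>T. \<Sum>t\<in>T. \<Sum>p\<in>D. (co s * cnj (co t)) * (e s p * cnj (e t p)))"
      by (intro sum.cong refl) (rule sum.swap)
    also have "\<dots> = (\<Sum>s\<in>T. \<Sum>t\<in>T. (co s * cnj (co t)) * (if s = t then complex_of_real c else 0))"
      by (intro sum.cong refl) (simp add: sum_distrib_left[symmetric] orth)
    also have "\<dots> = (\<Sum>s\<in>T. (co s * cnj (co s)) * complex_of_real c)"
      using T by (simp add: if_distrib[where f="\<lambda>x. _ * x"] sum.delta cong: if_cong)
    also have "\<dots> = complex_of_real (c * Q)"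
      unfolding Q_def by (simp add: cnj_self sum_distrib_left ac_simps)
    finally show ?thesis .
  qed
  have XX: "(\<Sum>p\<in>D. X p * cnj (X p)) = complex_of_real H"
    unfolding H_def by (simp add: cnj_self)
  define Z where "Z p = X p - Y p / complex_of_real c" for p
  have pt: "Z p * cnj (Z p) = X p * cnj (X p) - X p * cnj (Y p) / complex_of_real c
       - Y p * cnj (X p) / complex_of_real c + Y p * cnj (Y p) / (complex_of_real c)^2" for p
    unfolding Z_def using c by (simp add: field_simps power2_eq_square)
  have "complex_of_real (\<Sum>p\<in>D. (cmod (Z p))^2) = (\<Sum>p\<in>D. Z p * cnj (Z p))"
    by (simp add: cnj_self)
  also have "\<dots> = complex_of_real H - complex_of_real Q / complex_of_real c - complex_of_real Q / complex_of_real c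
      + complex_of_real (c*Q) / (complex_of_real c)^2"
    unfolding pt by (simp add: sum.distrib sum_subtractf sum_divide_distrib[symmetric] XX XY YX YY)
  also have "\<dots> = complex_of_real (H - Q / c)"
    using c by (simp add: field_simps power2_eq_square)
  finally have "(\<Sum>p\<in>D. (cmod (Z p))^2) = H - Q / c"
    using of_real_eq_iff by blast
  moreover have "0 \<le> (\<Sum>p\<in>D. (cmod (Z p))^2)" by (simp add: sum_nonneg)
  ultimately have "Q / c \<le> H" by simp
  then have "Q \<le> c * H" using c by (simp add: field_simps)
  then show ?thesis unfolding Q_def H_def co_def .
qed



lemma two_point_sum:
  assumes "finite S" "i \<in> S" "j \<in> S" "i \<noteq> j" "\<And>k. k \<in> S \<Longrightarrow> k \<noteq> i \<Longrightarrow> k \<noteq> j \<Longrightarrow> f k = 0"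
  shows "sum f S = f i + f j"
proof -
  have "sum f S = sum f {i,j}"
    using assms by (intro sum.mono_neutral_right) auto
  then show ?thesis using assms by simp
qed

lemma one_point_sum:
  assumes "finite S" "i \<in> S" "\<And>k. k \<in> S \<Longrightarrow> k \<noteq> i \<Longrightarrow> f k = 0"
  shows "sum f S = f i"
proof -
  have "sum f S = sum f {i}"
    using assms by (intro sum.mono_neutral_right) auto
  then show ?thesis by simp
qed

lemma psd_q:
  assumes "psd A" "A \<in> carrier_mat d d" "dim_vec v = d"
  shows "Im (\<Sum>k<d. \<Sum>l<d. cnj (v $ k) * A $$ (k,l) * v $ l) = 0 \<and>
         Re (\<Sum>k<d. \<Sum>l<d. cnj (v $ k) * A $$ (k,l) * v $ l) \<ge> 0"
  using assms unfolding psd_def Let_def by auto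

lemma qform1:
  assumes "i < d"
  shows "(\<Sum>k<d. \<Sum>l<d. cnj (vec d (\<lambda>k. if k = i then x else 0) $ k) * A $$ (k,l) * vec d (\<lambda>k. if k = i then x else 0) $ l)
    = cnj x * A $$ (i,i) * x"
proof -
  have "(\<Sum>k<d. \<Sum>l<d. cnj (vec d (\<lambda>k. if k = i then x else 0) $ k) * A $$ (k,l) * vec d (\<lambda>k. if k = i then x else 0) $ l)
      = (\<Sum>k<d. \<Sum>l<d. cnj (if k = i then x else 0) * A $$ (k,l) * (if l = i then x else 0))"
    by (intro sum.cong refl) simp
  also have "\<dots> = (\<Sum>k<d. cnj (if k = i then x else 0) * A $$ (k,i) * x)"
    by (intro sum.cong refl, subst one_point_sum[of _ i]) (use assms in auto)
  also have "\<dots> = cnj x * A $$ (i,i) * x"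
    by (subst one_point_sum[of _ i]) (use assms in auto)
  finally show ?thesis .
qed

lemma qform2:
  fixes x y :: complex and A :: "complex mat"
  assumes "i < d" "j < d" "i \<noteq> j"
  defines "v \<equiv> vec d (\<lambda>k. if k = i then x else if k = j then y else 0)"
  shows "(\<Sum>k<d. \<Sum>l<d. cnj (v $ k) * A $$ (k,l) * v $ l)
    = cnj x * A $$ (i,i) * x + cnj x * A $$ (i,j) * y + cnj y * A $$ (j,i) * x + cnj y * A $$ (j,j) * y"
proof -
  have "(\<Sum>k<d. \<Sum>l<d. cnj (v $ k) * A $$ (k,l) * v $ l)
      = (\<Sum>k<d. \<Sum>l<d. cnj (if k = i then x else if k = j then y else 0) * A $$ (k,l) * (if l = i then x else if l = j then y else 0))"
    unfolding v_def by (intro sum.cong refl) simp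
  also have "\<dots> = (\<Sum>k<d. cnj (if k = i then x else if k = j then y else 0) * A $$ (k,i) * x
                      + cnj (if k = i then x else if k = j then y else 0) * A $$ (k,j) * y)"
    by (intro sum.cong refl, subst two_point_sum[of _ i j]) (use assms in auto)
  also have "\<dots> = cnj x * A $$ (i,i) * x + cnj x * A $$ (i,j) * y + (cnj y * A $$ (j,i) * x + cnj y * A $$ (j,j) * y)"
    by (subst two_point_sum[of _ i j]) (use assms in auto)
  finally show ?thesis by simp
qed

lemma psd_diag:
  assumes "psd A" "A \<in> carrier_mat d d" "i < d"
  shows "Im (A $$ (i,i)) = 0 \<and> Re (A $$ (i,i)) \<ge> 0"
  using psd_q[OF assms(1,2), of "vec d (\<lambda>k. if k = i then 1 else 0)"]
  unfolding qform1[OF assms(3)] by simp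


lemma psd_offdiag:
  assumes "psd A" "A \<in> carrier_mat d d" "i < d" "j < d" "i \<noteq> j"
  shows "A $$ (j,i) = cnj (A $$ (i,j)) \<and> (cmod (A $$ (i,j)))^2 \<le> Re (A $$ (i,i)) * Re (A $$ (j,j))"
proof -
  define a where "a = Re (A $$ (i,i))"
  define b where "b = Re (A $$ (j,j))"
  define z where "z = A $$ (i,j)"
  define w where "w = A $$ (j,i)"
  have a0: "a \<ge> 0" and b0: "b \<ge> 0" using psd_diag[OF assms(1,2,3)] psd_diag[OF assms(1,2,4)] a_def b_def by auto
  have ai: "A $$ (i,i) = complex_of_real a" using psd_diag[OF assms(1,2,3)] a_def by (simp add: complex_eq_iff)
  have bj: "A $$ (j,j) = complex_of_real b" using psd_diag[OF assms(1,2,4)] b_def by (simp add: complex_eq_iff)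
  have Q: "Im (cnj x * complex_of_real a * x + cnj x * z * y + cnj y * w * x + cnj y * complex_of_real b * y) = 0 \<and>
           Re (cnj x * complex_of_real a * x + cnj x * z * y + cnj y * w * x + cnj y * complex_of_real b * y) \<ge> 0" for x y
    using psd_q[OF assms(1,2), of "vec d (\<lambda>k. if k = i then x else if k = j then y else 0)"]
    unfolding qform2[OF assms(3,4,5)] ai bj z_def[symmetric] w_def[symmetric] by simp
  have h1: "Im z + Im w = 0" using Q[of 1 1] by simp
  have h2: "Re z = Re w" using Q[of 1 \<i>] by simp
  have wz: "w = cnj z" using h1 h2 by (simp add: complex_eq_iff)
  have "(cmod z)^2 \<le> a * b"
  proof (cases "b > 0")
    case True
    have "Re (cnj (complex_of_real b) * complex_of_real a * complex_of_real b + cnj (complex_of_real b) * z * (- cnj z)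
       + cnj (- cnj z) * w * complex_of_real b + cnj (- cnj z) * complex_of_real b * (- cnj z)) = b * (a*b - ((Re z)^2 + (Im z)^2))"
      by (simp add: wz algebra_simps power2_eq_square)
    then have "0 \<le> b * (a*b - ((Re z)^2 + (Im z)^2))" using Q[of "complex_of_real b" "- cnj z"] by simp
    then have "(Re z)^2 + (Im z)^2 \<le> a * b" using True by (simp add: zero_le_mult_iff)
    then show ?thesis by (simp add: cmod_power2)
  next
    case False
    then have b: "b = 0" using b0 by simp
    show ?thesis
    proof (cases "a > 0")
      case True
      have "Re (cnj (- z) * complex_of_real a * (- z) + cnj (- z) * z * complex_of_real a
         + cnj (complex_of_real a) * w * (- z) + cnj (complex_of_real a) * complex_of_real b * complex_of_real a) = a * (a*b - ((Re z)^2 + (Im z)^2))"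
        by (simp add: wz algebra_simps power2_eq_square)
      then have "0 \<le> a * (a*b - ((Re z)^2 + (Im z)^2))" using Q[of "- z" "complex_of_real a"] by simp
      then have "(Re z)^2 + (Im z)^2 \<le> a * b" using True by (simp add: zero_le_mult_iff)
      then show ?thesis by (simp add: cmod_power2)
    next
      case False
      then have a: "a = 0" using a0 by simp
      have "Re (cnj 1 * complex_of_real a * 1 + cnj 1 * z * (- cnj z)
         + cnj (- cnj z) * w * 1 + cnj (- cnj z) * complex_of_real b * (- cnj z)) = - 2 * ((Re z)^2 + (Im z)^2)"
        by (simp add: wz a b algebra_simps power2_eq_square)
      then have "0 \<le> - 2 * ((Re z)^2 + (Im z)^2)" using Q[of 1 "- cnj z"] by simp
      then have "(Re z)^2 + (Im z)^2 \<le> a * b" using a b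
        by (simp add: add_nonneg_eq_0_iff)
      then show ?thesis by (simp add: cmod_power2)
    qed
  qed
  then show ?thesis using wz unfolding a_def b_def z_def w_def by simp
qed

lemma psd_entry_bound:
  assumes "psd A" "A \<in> carrier_mat d d" "i < d" "j < d"
  shows "(cmod (A $$ (i,j)))^2 \<le> Re (A $$ (i,i)) * Re (A $$ (j,j))"
proof (cases "i = j")
  case True
  then show ?thesis using psd_diag[OF assms(1,2,3)] by (simp only: True cmod_power2) (simp add: power2_eq_square)
next
  case False
  then show ?thesis using psd_offdiag[OF assms] by simp
qed

lemma psd_hs:
  assumes "psd A" "A \<in> carrier_mat d d"
  shows "(\<Sum>i<d. \<Sum>j<d. (cmod (A $$ (i,j)))^2) \<le> (\<Sum>i<d. Re (A $$ (i,i)))^2"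
proof -
  have "(\<Sum>i<d. \<Sum>j<d. (cmod (A $$ (i,j)))^2) \<le> (\<Sum>i<d. \<Sum>j<d. Re (A $$ (i,i)) * Re (A $$ (j,j)))"
    using psd_entry_bound[OF assms] by (intro sum_mono) auto
  also have "\<dots> = (\<Sum>i<d. Re (A $$ (i,i)))^2"
    by (simp add: power2_eq_square sum_product)
  finally show ?thesis .
qed

lemma psd_trace:
  assumes "psd A" "A \<in> carrier_mat d d"
  shows "(\<Sum>i<d. A $$ (i,i)) = complex_of_real (\<Sum>i<d. Re (A $$ (i,i)))"
    "(\<Sum>i<d. Re (A $$ (i,i))) \<ge> 0"
proof -
  have "A $$ (i,i) = complex_of_real (Re (A $$ (i,i)))" if "i < d" for i
    using psd_diag[OF assms that] by (simp add: complex_eq_iff)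
  then show "(\<Sum>i<d. A $$ (i,i)) = complex_of_real (\<Sum>i<d. Re (A $$ (i,i)))"
    by (simp add: of_real_sum)
  show "(\<Sum>i<d. Re (A $$ (i,i))) \<ge> 0" using psd_diag[OF assms] by (intro sum_nonneg) auto
qed


lemma cs_sum:
  fixes a b :: "'a \<Rightarrow> real"
  shows "(\<Sum>i\<in>I. a i * b i)\<^sup>2 \<le> (\<Sum>i\<in>I. (a i)\<^sup>2) * (\<Sum>i\<in>I. (b i)\<^sup>2)"
proof (cases "(\<Sum>i\<in>I. (b i)\<^sup>2) > 0")
  case False
  then consider "\<And>i. i\<in>I \<Longrightarrow> b i = 0" | "infinite I"
    by (metis (mono_tags, lifting) sum_pos2 zero_le_power2 zero_less_power2)
  thus ?thesis
    by fastforce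
next
  case True
  define r where "r \<equiv> (\<Sum>i\<in>I. a i * b i) / (\<Sum>i\<in>I. (b i)\<^sup>2)"
  have "0 \<le> (\<Sum>i\<in>I. (a i - r * b i)\<^sup>2)"
    by (simp add: sum_nonneg)
  also have "... = (\<Sum>i\<in>I. (a i)\<^sup>2) - 2 * r * (\<Sum>i\<in>I. a i * b i) + r\<^sup>2 * (\<Sum>i\<in>I. (b i)\<^sup>2)"
    by (simp add: algebra_simps power2_eq_square sum_distrib_left flip: sum.distrib)
  also have "\<dots> = (\<Sum>i\<in>I. (a i)\<^sup>2) - ((\<Sum>i\<in>I. a i * b i))\<^sup>2 / (\<Sum>i\<in>I. (b i)\<^sup>2)"
    by (simp add: r_def power2_eq_square)
  finally have "0 \<le> (\<Sum>i\<in>I. (a i)\<^sup>2) - ((\<Sum>i\<in>I. a i * b i))\<^sup>2 / (\<Sum>i\<in>I. (b i)\<^sup>2)" .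
  hence "((\<Sum>i\<in>I. a i * b i))\<^sup>2 / (\<Sum>i\<in>I. (b i)\<^sup>2) \<le> (\<Sum>i\<in>I. (a i)\<^sup>2)"
    by (simp add: le_diff_eq)
  thus "((\<Sum>i\<in>I. a i * b i))\<^sup>2 \<le> (\<Sum>i\<in>I. (a i)\<^sup>2) * (\<Sum>i\<in>I. (b i)\<^sup>2)"
    by (simp add: pos_divide_le_eq True)
qed

lemma finite_idx: "finite (idx N)"
proof -
  have "idx N = {xs. set xs \<subseteq> {0..<4} \<and> length xs = N}" by (auto simp: idx_def)
  then show ?thesis using finite_lists_length_eq[of "{0..<4::nat}" N] by simp
qed

lemma idx_carrier: "s \<in> idx N \<Longrightarrow> pauli_string s \<in> carrier_mat (2^N) (2^N)"
  using pauli_string_carrier[of s] by (simp add: idx_def)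

lemma bessel_pauli:
  fixes X :: "nat \<Rightarrow> nat \<Rightarrow> complex" and tr :: bool
  defines "e \<equiv> \<lambda>t x y. if tr then pauli_string t $$ (y,x) else pauli_string t $$ (x,y)"
  shows "(\<Sum>t\<in>idx N. (cmod (\<Sum>x<2^N. \<Sum>y<2^N. X x y * cnj (e t x y)))^2)
     \<le> 2^N * (\<Sum>x<2^N. \<Sum>y<2^N. (cmod (X x y))^2)"
proof -
  let ?D = "{..<(2::nat)^N} \<times> {..<(2::nat)^N}"
  have ds: "(\<Sum>x<2^N. \<Sum>y<2^N. f x y) = (\<Sum>p\<in>?D. f (fst p) (snd p))" for f :: "nat \<Rightarrow> nat \<Rightarrow> 'z::comm_monoid_add"
    by (simp add: sum.cartesian_product split_def)
  have orth: "(\<Sum>p\<in>?D. e s (fst p) (snd p) * cnj (e t (fst p) (snd p))) = (if s = t then complex_of_real (2^N) else 0)"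
    if "s \<in> idx N" "t \<in> idx N" for s t
  proof -
    have o: "(\<Sum>x<2^N. \<Sum>y<2^N. pauli_string s $$ (x,y) * cnj (pauli_string t $$ (x,y))) = (if s = t then 2^N else 0)"
      using that by (intro pauli_string_orth) (auto simp: idx_def)
    have "(\<Sum>x<2^N. \<Sum>y<2^N. e s x y * cnj (e t x y)) = (if s = t then 2^N else 0)"
    proof (cases tr)
      case True
      have "(\<Sum>x<2^N. \<Sum>y<2^N. pauli_string s $$ (y,x) * cnj (pauli_string t $$ (y,x)))
          = (\<Sum>y<2^N. \<Sum>x<2^N. pauli_string s $$ (y,x) * cnj (pauli_string t $$ (y,x)))"
        by (rule sum.swap)
      then show ?thesis unfolding e_def using o True by simp
    next
      case False
      then show ?thesis unfolding e_def using o by simp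
    qed
    then show ?thesis unfolding ds by simp
  qed
  have "(\<Sum>t\<in>idx N. (cmod (\<Sum>p\<in>?D. X (fst p) (snd p) * cnj (e t (fst p) (snd p))))^2)
     \<le> 2^N * (\<Sum>p\<in>?D. (cmod (X (fst p) (snd p)))^2)"
    by (rule bessel[OF finite_idx _ _ orth]) auto
  then show ?thesis unfolding ds .
qed

lemma key:
  assumes A: "psd A" "A \<in> carrier_mat (2^N) (2^N)" and B: "psd B" "B \<in> carrier_mat (2^N) (2^N)"
  shows "(\<Sum>t\<in>idx N. cmod (\<Sum>x<2^N. \<Sum>x'<2^N. A $$ (x,x') * cnj (pauli_string t $$ (x',x)))
                     * cmod (\<Sum>y<2^N. \<Sum>y'<2^N. B $$ (y,y') * cnj (pauli_string t $$ (y,y'))))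
     \<le> 2^N * (\<Sum>i<2^N. Re (A $$ (i,i))) * (\<Sum>i<2^N. Re (B $$ (i,i)))"
    (is "?L \<le> 2^N * ?a * ?b")
proof -
  define al where "al t = cmod (\<Sum>x<2^N. \<Sum>x'<2^N. A $$ (x,x') * cnj (pauli_string t $$ (x',x)))" for t
  define be where "be t = cmod (\<Sum>y<2^N. \<Sum>y'<2^N. B $$ (y,y') * cnj (pauli_string t $$ (y,y')))" for t
  have a1: "(\<Sum>t\<in>idx N. (al t)^2) \<le> 2^N * ?a^2"
  proof -
    have "(\<Sum>t\<in>idx N. (al t)^2) \<le> 2^N * (\<Sum>x<2^N. \<Sum>y<2^N. (cmod (A $$ (x,y)))^2)"
      using bessel_pauli[where X="\<lambda>x y. A $$ (x,y)" and tr=True and N=N] unfolding al_def by simp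
    also have "\<dots> \<le> 2^N * ?a^2"
      using psd_hs[OF A] by (intro mult_left_mono) auto
    finally show ?thesis .
  qed
  have b1: "(\<Sum>t\<in>idx N. (be t)^2) \<le> 2^N * ?b^2"
  proof -
    have "(\<Sum>t\<in>idx N. (be t)^2) \<le> 2^N * (\<Sum>x<2^N. \<Sum>y<2^N. (cmod (B $$ (x,y)))^2)"
      using bessel_pauli[where X="\<lambda>x y. B $$ (x,y)" and tr=False and N=N] unfolding be_def by simp
    also have "\<dots> \<le> 2^N * ?b^2"
      using psd_hs[OF B] by (intro mult_left_mono) auto
    finally show ?thesis .
  qed
  have "(\<Sum>t\<in>idx N. al t * be t)^2 \<le> (\<Sum>t\<in>idx N. (al t)^2) * (\<Sum>t\<in>idx N. (be t)^2)"
    by (rule cs_sum)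
  also have "\<dots> \<le> (2^N * ?a^2) * (2^N * ?b^2)"
    using a1 b1 by (intro mult_mono) (auto intro: sum_nonneg)
  also have "\<dots> = (2^N * ?a * ?b)^2" by (simp add: power2_eq_square ac_simps)
  finally have "(\<Sum>t\<in>idx N. al t * be t)^2 \<le> (2^N * ?a * ?b)^2" .
  moreover have "0 \<le> 2^N * ?a * ?b" using psd_trace(2)[OF A] psd_trace(2)[OF B] by simp
  ultimately have "(\<Sum>t\<in>idx N. al t * be t) \<le> 2^N * ?a * ?b" by (rule power2_le_imp_le)
  then show ?thesis unfolding al_def be_def .
qed


lemma unit_entry: "a < d \<Longrightarrow> b < d \<Longrightarrow> unit_mat d i j $$ (a,b) = (if a = i \<and> b = j then 1 else 0)"
  by (simp add: unit_mat_def)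

lemma unit_dims[simp]: "dim_row (unit_mat d i j) = d" "dim_col (unit_mat d i j) = d"
  by (simp_all add: unit_mat_def)

lemma PiMap_dims[simp]: "dim_row (PiMap N \<mu> X) = 2^N" "dim_col (PiMap N \<mu> X) = 2^N"
  by (simp_all add: PiMap_def)

lemma choi_Pi_entry:
  assumes "x < 2^N" "y < 2^N" "x' < 2^N" "y' < 2^N"
  shows "choi (2^N) (2^N) (PiMap N \<mu>) $$ (x*2^N+y, x'*2^N+y')
       = (\<Sum>s\<in>idx N. complex_of_real (\<mu> s / 2^N) * pauli_string s $$ (x',x) * pauli_string s $$ (y,y'))"
proof -
  let ?d = "(2::nat)^N"
  have r: "x*?d+y < ?d*?d" "x'*?d+y' < ?d*?d" using lt_mul[of x ?d y ?d] lt_mul[of x' ?d y' ?d] assms by auto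
  have "choi ?d ?d (PiMap N \<mu>) $$ (x*?d+y, x'*?d+y')
     = (\<Sum>i<?d. \<Sum>j<?d. kron (unit_mat ?d i j) (PiMap N \<mu> (unit_mat ?d i j)) $$ (x*?d+y, x'*?d+y'))"
    unfolding choi_def using r by simp
  also have "\<dots> = (\<Sum>i<?d. \<Sum>j<?d. unit_mat ?d i j $$ (x, x') * PiMap N \<mu> (unit_mat ?d i j) $$ (y, y'))"
    by (intro sum.cong refl, subst kron_entry) (use r assms in \<open>simp_all add: dm\<close>)
  also have "\<dots> = (\<Sum>i<?d. \<Sum>j<?d. (if x = i \<and> x' = j then 1 else 0) * PiMap N \<mu> (unit_mat ?d i j) $$ (y, y'))"
    by (intro sum.cong refl) (use assms in \<open>simp add: unit_entry\<close>)
  also have "\<dots> = PiMap N \<mu> (unit_mat ?d x x') $$ (y, y')"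
  proof -
    have "(\<Sum>j<?d. (if x = i \<and> x' = j then 1 else 0) * PiMap N \<mu> (unit_mat ?d i j) $$ (y, y'))
        = (if x = i then PiMap N \<mu> (unit_mat ?d i x') $$ (y, y') else 0)" if "i < ?d" for i
      by (subst one_point_sum[of _ x']) (use assms in auto)
    then have "(\<Sum>i<?d. \<Sum>j<?d. (if x = i \<and> x' = j then 1 else 0) * PiMap N \<mu> (unit_mat ?d i j) $$ (y, y'))
        = (\<Sum>i<?d. (if x = i then PiMap N \<mu> (unit_mat ?d i x') $$ (y, y') else 0))"
      by (intro sum.cong refl) auto
    also have "\<dots> = PiMap N \<mu> (unit_mat ?d x x') $$ (y, y')"
      by (subst one_point_sum[of _ x]) (use assms in auto)
    finally show ?thesis .
  qed
  also have "\<dots> = (\<Sum>s\<in>idx N. complex_of_real (\<mu> s / 2^N) * mtrace (pauli_string s * unit_mat ?d x x') * pauli_string s $$ (y,y'))"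
    unfolding PiMap_def using assms by simp
  also have "\<dots> = (\<Sum>s\<in>idx N. complex_of_real (\<mu> s / 2^N) * pauli_string s $$ (x',x) * pauli_string s $$ (y,y'))"
    by (intro sum.cong refl) (use assms idx_carrier in \<open>simp add: mtrace_unit\<close>)
  finally show ?thesis .
qed

lemma sep_entry:
  assumes "\<forall>k<n. A k \<in> carrier_mat d d \<and> B k \<in> carrier_mat d d"
    "x < d" "y < d" "x' < d" "y' < d"
  shows "mat (d*d) (d*d) (\<lambda>(r,c). \<Sum>k<n. kron (A k) (B k) $$ (r,c)) $$ (x*d+y, x'*d+y')
       = (\<Sum>k<n. A k $$ (x,x') * B k $$ (y,y'))"
proof -
  have r: "x*d+y < d*d" "x'*d+y' < d*d" using lt_mul[of x d y d] lt_mul[of x' d y' d] assms by auto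
  show ?thesis
    using r by (simp, intro sum.cong refl, subst kron_entry) (use assms in \<open>auto simp: dm\<close>)
qed

lemma prod4K:
  fixes F G :: "_ \<Rightarrow> nat \<Rightarrow> nat \<Rightarrow> 'a::comm_semiring_0" and H J :: "nat \<Rightarrow> nat \<Rightarrow> 'a"
  shows "(\<Sum>x<a. \<Sum>y<b. \<Sum>x'<c. \<Sum>y'<e. (\<Sum>k\<in>K. F k x x' * G k y y') * (H x x' * J y y'))
       = (\<Sum>k\<in>K. (\<Sum>x<a. \<Sum>x'<c. F k x x' * H x x') * (\<Sum>y<b. \<Sum>y'<e. G k y y' * J y y'))"
proof -
  have "(\<Sum>x<a. \<Sum>y<b. \<Sum>x'<c. \<Sum>y'<e. (\<Sum>k\<in>K. F k x x' * G k y y') * (H x x' * J y y'))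
     = (\<Sum>x<a. \<Sum>y<b. \<Sum>x'<c. \<Sum>y'<e. \<Sum>k\<in>K. (F k x x' * H x x') * (G k y y' * J y y'))"
    by (simp add: sum_distrib_right sum_distrib_left ac_simps)
  also have "\<dots> = (\<Sum>x<a. \<Sum>y<b. \<Sum>x'<c. \<Sum>k\<in>K. \<Sum>y'<e. (F k x x' * H x x') * (G k y y' * J y y'))"
    by (rule sum.cong[OF refl], rule sum.cong[OF refl], rule sum.cong[OF refl], rule sum.swap)
  also have "\<dots> = (\<Sum>x<a. \<Sum>y<b. \<Sum>k\<in>K. \<Sum>x'<c. \<Sum>y'<e. (F k x x' * H x x') * (G k y y' * J y y'))"
    by (rule sum.cong[OF refl], rule sum.cong[OF refl], rule sum.swap)
  also have "\<dots> = (\<Sum>x<a. \<Sum>k\<in>K. \<Sum>y<b. \<Sum>x'<c. \<Sum>y'<e. (F k x x' * H x x') * (G k y y' * J y y'))"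
    by (rule sum.cong[OF refl], rule sum.swap)
  also have "\<dots> = (\<Sum>k\<in>K. \<Sum>x<a. \<Sum>y<b. \<Sum>x'<c. \<Sum>y'<e. (F k x x' * H x x') * (G k y y' * J y y'))"
    by (rule sum.swap)
  also have "\<dots> = (\<Sum>k\<in>K. (\<Sum>x<a. \<Sum>x'<c. F k x x' * H x x') * (\<Sum>y<b. \<Sum>y'<e. G k y y' * J y y'))"
    by (rule sum.cong[OF refl]) (simp only: prod4)
  finally show ?thesis .
qed

lemma prod2K:
  fixes F G :: "_ \<Rightarrow> _ \<Rightarrow> 'a::comm_semiring_0"
  shows "(\<Sum>x<a. \<Sum>y<b. \<Sum>k\<in>K. F k x * G k y) = (\<Sum>k\<in>K. (\<Sum>x<a. F k x) * (\<Sum>y<b. G k y))"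
proof -
  have "(\<Sum>x<a. \<Sum>y<b. \<Sum>k\<in>K. F k x * G k y) = (\<Sum>x<a. \<Sum>k\<in>K. \<Sum>y<b. F k x * G k y)"
    by (rule sum.cong[OF refl], rule sum.swap)
  also have "\<dots> = (\<Sum>k\<in>K. \<Sum>x<a. \<Sum>y<b. F k x * G k y)"
    by (rule sum.swap)
  also have "\<dots> = (\<Sum>k\<in>K. (\<Sum>x<a. F k x) * (\<Sum>y<b. G k y))"
    by (simp add: sum_product)
  finally show ?thesis .
qed


lemma orth_swap:
  assumes "s \<in> idx N" "t \<in> idx N"
  shows "(\<Sum>x<2^N. \<Sum>x'<2^N. pauli_string s $$ (x',x) * cnj (pauli_string t $$ (x',x))) = (if s = t then 2^N else 0)"
proof -
  have "(\<Sum>x<2^N. \<Sum>x'<2^N. pauli_string s $$ (x',x) * cnj (pauli_string t $$ (x',x)))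
      = (\<Sum>x'<2^N. \<Sum>x<2^N. pauli_string s $$ (x',x) * cnj (pauli_string t $$ (x',x)))"
    by (rule sum.swap)
  also have "\<dots> = (if s = t then 2^N else 0)"
    using assms by (intro pauli_string_orth) (auto simp: idx_def)
  finally show ?thesis .
qed

theorem mainTheorem4:
  fixes N :: nat and \<mu> :: "nat list \<Rightarrow> real"
  assumes "\<mu> (replicate N 0) = 1"
    and "entanglement_breaking (2^N) (2^N) (PiMap N \<mu>)"
  shows "(\<Sum>is\<in>idx N. \<bar>\<mu> is\<bar>) \<le> 2^N"
proof -
  let ?d = "(2::nat)^N"
  from assms(2)[unfolded entanglement_breaking_def separable_op_def] obtain n :: nat and A B where
    H: "(\<forall>k<n. A k \<in> carrier_mat ?d ?d \<and> psd (A k) \<and> B k \<in> carrier_mat ?d ?d \<and> psd (B k)) \<and>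
        choi ?d ?d (PiMap N \<mu>) = mat (?d*?d) (?d*?d) (\<lambda>(r,c). \<Sum>k<n. kron (A k) (B k) $$ (r,c))"
    by blast
  have AB: "\<forall>k<n. A k \<in> carrier_mat ?d ?d \<and> psd (A k) \<and> B k \<in> carrier_mat ?d ?d \<and> psd (B k)"
    using H by (rule conjunct1)
  have C: "choi ?d ?d (PiMap N \<mu>) = mat (?d*?d) (?d*?d) (\<lambda>(r,c). \<Sum>k<n. kron (A k) (B k) $$ (r,c))"
    using H by (rule conjunct2)
  have AB': "\<forall>k<n. A k \<in> carrier_mat ?d ?d \<and> B k \<in> carrier_mat ?d ?d" using AB by simp
  have E: "(\<Sum>s\<in>idx N. complex_of_real (\<mu> s / 2^N) * pauli_string s $$ (x',x) * pauli_string s $$ (y,y'))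
         = (\<Sum>k<n. A k $$ (x,x') * B k $$ (y,y'))"
    if "x < ?d" "y < ?d" "x' < ?d" "y' < ?d" for x y x' y'
  proof -
    have 1: "choi ?d ?d (PiMap N \<mu>) $$ (x*?d+y, x'*?d+y')
        = (\<Sum>s\<in>idx N. complex_of_real (\<mu> s / 2^N) * pauli_string s $$ (x',x) * pauli_string s $$ (y,y'))"
      by (rule choi_Pi_entry[OF that])
    have 2: "choi ?d ?d (PiMap N \<mu>) $$ (x*?d+y, x'*?d+y') = (\<Sum>k<n. A k $$ (x,x') * B k $$ (y,y'))"
      unfolding C by (rule sep_entry[OF AB' that])
    show ?thesis using 1 2 by simp
  qed
  define al where "al k t = (\<Sum>x<?d. \<Sum>x'<?d. A k $$ (x,x') * cnj (pauli_string t $$ (x',x)))" for k t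
  define be where "be k t = (\<Sum>y<?d. \<Sum>y'<?d. B k $$ (y,y') * cnj (pauli_string t $$ (y,y')))" for k t
  define a where "a k = (\<Sum>i<?d. Re (A k $$ (i,i)))" for k
  define b where "b k = (\<Sum>i<?d. Re (B k $$ (i,i)))" for k
  have St: "complex_of_real (2^N * \<mu> t) = (\<Sum>k<n. al k t * be k t)" if t: "t \<in> idx N" for t
  proof -
    have "(\<Sum>x<?d. \<Sum>y<?d. \<Sum>x'<?d. \<Sum>y'<?d.
            (\<Sum>s\<in>idx N. complex_of_real (\<mu> s / 2^N) * pauli_string s $$ (x',x) * pauli_string s $$ (y,y'))
            * (cnj (pauli_string t $$ (x',x)) * cnj (pauli_string t $$ (y,y'))))
        = (\<Sum>x<?d. \<Sum>y<?d. \<Sum>x'<?d. \<Sum>y'<?d.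
            (\<Sum>k<n. A k $$ (x,x') * B k $$ (y,y')) * (cnj (pauli_string t $$ (x',x)) * cnj (pauli_string t $$ (y,y'))))"
      by (intro sum.cong refl) (simp only: E lessThan_iff)
    also have "\<dots> = (\<Sum>k<n. al k t * be k t)"
      unfolding al_def be_def by (rule prod4K)
    finally have R: "(\<Sum>x<?d. \<Sum>y<?d. \<Sum>x'<?d. \<Sum>y'<?d.
            (\<Sum>s\<in>idx N. complex_of_real (\<mu> s / 2^N) * pauli_string s $$ (x',x) * pauli_string s $$ (y,y'))
            * (cnj (pauli_string t $$ (x',x)) * cnj (pauli_string t $$ (y,y'))))
        = (\<Sum>k<n. al k t * be k t)" .
    have "(\<Sum>x<?d. \<Sum>y<?d. \<Sum>x'<?d. \<Sum>y'<?d.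
            (\<Sum>s\<in>idx N. complex_of_real (\<mu> s / 2^N) * pauli_string s $$ (x',x) * pauli_string s $$ (y,y'))
            * (cnj (pauli_string t $$ (x',x)) * cnj (pauli_string t $$ (y,y'))))
       = (\<Sum>s\<in>idx N. (\<Sum>x<?d. \<Sum>x'<?d. complex_of_real (\<mu> s / 2^N) * pauli_string s $$ (x',x) * cnj (pauli_string t $$ (x',x)))
            * (\<Sum>y<?d. \<Sum>y'<?d. pauli_string s $$ (y,y') * cnj (pauli_string t $$ (y,y'))))"
      by (rule prod4K)
    also have "\<dots> = (\<Sum>s\<in>idx N. (if s = t then complex_of_real (\<mu> s / 2^N) * 2^N * 2^N else 0))"
    proof (intro sum.cong refl)
      fix s assume s: "s \<in> idx N"
      have o1: "(\<Sum>x<?d. \<Sum>x'<?d. complex_of_real (\<mu> s / 2^N) * pauli_string s $$ (x',x) * cnj (pauli_string t $$ (x',x)))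
          = complex_of_real (\<mu> s / 2^N) * (if s = t then 2^N else 0)"
        unfolding orth_swap[OF s t, symmetric] by (simp add: sum_distrib_left mult.assoc)
      have o2: "(\<Sum>y<?d. \<Sum>y'<?d. pauli_string s $$ (y,y') * cnj (pauli_string t $$ (y,y'))) = (if s = t then 2^N else 0)"
        using s t by (intro pauli_string_orth) (auto simp: idx_def)
      show "(\<Sum>x<?d. \<Sum>x'<?d. complex_of_real (\<mu> s / 2^N) * pauli_string s $$ (x',x) * cnj (pauli_string t $$ (x',x)))
            * (\<Sum>y<?d. \<Sum>y'<?d. pauli_string s $$ (y,y') * cnj (pauli_string t $$ (y,y')))
          = (if s = t then complex_of_real (\<mu> s / 2^N) * 2^N * 2^N else 0)"
        unfolding o1 o2 by simp
    qed
    also have "\<dots> = complex_of_real (\<mu> t / 2^N) * 2^N * 2^N"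
      using t finite_idx by (simp add: sum.delta)
    also have "\<dots> = complex_of_real (2^N * \<mu> t)"
      by (simp add: field_simps)
    finally show ?thesis using R by simp
  qed
  have Tr: "(\<Sum>k<n. a k * b k) = 2^N"
  proof -
    have "(\<Sum>x<?d. \<Sum>y<?d. \<Sum>s\<in>idx N. complex_of_real (\<mu> s / 2^N) * pauli_string s $$ (x,x) * pauli_string s $$ (y,y))
        = (\<Sum>x<?d. \<Sum>y<?d. \<Sum>k<n. A k $$ (x,x) * B k $$ (y,y))"
      by (intro sum.cong refl) (simp only: E lessThan_iff)
    moreover have "(\<Sum>x<?d. \<Sum>y<?d. \<Sum>s\<in>idx N. complex_of_real (\<mu> s / 2^N) * pauli_string s $$ (x,x) * pauli_string s $$ (y,y))
        = (\<Sum>s\<in>idx N. (\<Sum>x<?d. complex_of_real (\<mu> s / 2^N) * pauli_string s $$ (x,x)) * (\<Sum>y<?d. pauli_string s $$ (y,y)))"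
      by (rule prod2K)
    moreover have "\<dots> = (\<Sum>s\<in>idx N. (if s = replicate N 0 then complex_of_real (\<mu> s / 2^N) * 2^N * 2^N else 0))"
    proof (intro sum.cong refl)
      fix s assume s: "s \<in> idx N"
      have tr: "(\<Sum>y<?d. pauli_string s $$ (y,y)) = (if s = replicate N 0 then 2^N else 0)"
        using s by (intro pauli_string_trace) (auto simp: idx_def)
      show "(\<Sum>x<?d. complex_of_real (\<mu> s / 2^N) * pauli_string s $$ (x,x)) * (\<Sum>y<?d. pauli_string s $$ (y,y))
          = (if s = replicate N 0 then complex_of_real (\<mu> s / 2^N) * 2^N * 2^N else 0)"
        unfolding sum_distrib_left[symmetric] tr by simp
    qed
    moreover have "\<dots> = 2^N"
    proof -
      have "replicate N 0 \<in> idx N" by (auto simp: idx_def set_replicate_conv_if)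
      then have "(\<Sum>s\<in>idx N. (if s = replicate N 0 then complex_of_real (\<mu> s / 2^N) * 2^N * 2^N else 0))
          = complex_of_real (\<mu> (replicate N 0) / 2^N) * 2^N * 2^N"
        using finite_idx by (simp add: sum.delta')
      also have "\<dots> = 2^N" using assms(1) by (simp add: field_simps)
      finally show ?thesis .
    qed
    moreover have "(\<Sum>x<?d. \<Sum>y<?d. \<Sum>k<n. A k $$ (x,x) * B k $$ (y,y)) = complex_of_real (\<Sum>k<n. a k * b k)"
    proof -
      have "(\<Sum>x<?d. \<Sum>y<?d. \<Sum>k<n. A k $$ (x,x) * B k $$ (y,y)) = (\<Sum>k<n. (\<Sum>x<?d. A k $$ (x,x)) * (\<Sum>y<?d. B k $$ (y,y)))"
        by (rule prod2K)
      also have "\<dots> = (\<Sum>k<n. complex_of_real (a k) * complex_of_real (b k))"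
        using AB psd_trace(1) unfolding a_def b_def by (intro sum.cong refl) auto
      finally show ?thesis by simp
    qed
    ultimately have "complex_of_real (\<Sum>k<n. a k * b k) = 2^N" by simp
    then show ?thesis by (metis of_real_eq_iff of_real_numeral of_real_power)
  qed
  have bt: "2^N * \<bar>\<mu> t\<bar> \<le> (\<Sum>k<n. cmod (al k t) * cmod (be k t))" if t: "t \<in> idx N" for t
  proof -
    have "2^N * \<bar>\<mu> t\<bar> = cmod (complex_of_real (2^N * \<mu> t))" by (simp only: norm_of_real) (simp add: abs_mult)
    also have "\<dots> = cmod (\<Sum>k<n. al k t * be k t)" using St[OF t] by simp
    also have "\<dots> \<le> (\<Sum>k<n. cmod (al k t * be k t))" by (rule norm_sum)
    also have "\<dots> = (\<Sum>k<n. cmod (al k t) * cmod (be k t))" by (simp add: norm_mult)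
    finally show ?thesis .
  qed
  have "2^N * (\<Sum>t\<in>idx N. \<bar>\<mu> t\<bar>) = (\<Sum>t\<in>idx N. 2^N * \<bar>\<mu> t\<bar>)" by (simp add: sum_distrib_left)
  also have "\<dots> \<le> (\<Sum>t\<in>idx N. \<Sum>k<n. cmod (al k t) * cmod (be k t))" using bt by (rule sum_mono)
  also have "\<dots> = (\<Sum>k<n. \<Sum>t\<in>idx N. cmod (al k t) * cmod (be k t))" by (rule sum.swap)
  also have "\<dots> \<le> (\<Sum>k<n. 2^N * a k * b k)"
  proof (rule sum_mono)
    fix k assume "k \<in> {..<n}"
    then have "psd (A k)" "A k \<in> carrier_mat ?d ?d" "psd (B k)" "B k \<in> carrier_mat ?d ?d" using AB by auto
    from key[OF this] show "(\<Sum>t\<in>idx N. cmod (al k t) * cmod (be k t)) \<le> 2^N * a k * b k"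
      unfolding al_def be_def a_def b_def .
  qed
  also have "\<dots> = 2^N * 2^N" using Tr by (simp add: sum_distrib_left[symmetric] mult.assoc)
  finally have "2^N * (\<Sum>t\<in>idx N. \<bar>\<mu> t\<bar>) \<le> 2^N * 2^N" .
  then show ?thesis by simp
qed

end
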